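(* Let $n\ge8$ be even and let $\varphi$ be a smooth skew-morphism of $D_n$ with $\mathrm{Ker}\,\varphi=\langle a^2,b\rangle$, power function $\pi$ and order $k$. Then one of the following holds. (I) There exist integers $r,s\in\{0,\dots,n/2-1\}$, $u$ with $\gcd(u,n/2)=1$, and $e\in\{1,\dots,k-1\}$ such that for all integers $i$: $\varphi(a^{2i})=a^{2iu}$, $\varphi(a^{2i+1})=a^{2iu+2r+1}$, $\varphi(ba^{2i})=ba^{2iu+2s}$, $\varphi(ba^{2i+1})=ba^{2r+2s+2iu+1}$, and $\pi(a^{2i})\equiv\pi(ba^{2i})\equiv1$, $\pi(a^{2i+1})\equiv\pi(ba^{2i+1})\equiv e\pmod k$; and moreover: $u-1-2r\not\equiv0\pmod{n/2}$; $k$ is the smallest positive integer with $r\sigma(u,k)\equiv0$ and $s\sigma(u,k)\equiv0\pmod{n/2}$; $\gcd(e,k)=1$, $e\not\equiv1\pmod k$, $e^2\equiv1\pmod k$, $u^{e-1}\equiv1\pmod{n/2}$; $r\sigma(u,e-1)\equiv u-2r-1\pmod{n/2}$; and $s\sigma(u,e-1)\equiv -u+2r+1\pmod{n/2}$. (II) There exist integers $r,s\in\{0,\dots,n/2-1\}$, $u$ with $\gcd(u,n/2)=1$, and an odd integer $e>1$ such that $k=2(e-1)$ and for all integers $i$: $\varphi(a^{2i})=a^{2iu}$, $\varphi(a^{2i+1})=ba^{2r-2iu+1}$, $\varphi(ba^{2i})=ba^{2s+2iu}$, $\varphi(ba^{2i+1})=a^{2r-2s-2iu+1}$, and $\pi(a^{2i})\equiv\pi(ba^{2i})\equiv1$,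 $\pi(a^{2i+1})\equiv\pi(ba^{2i+1})\equiv e\pmod k$; and moreover: $u^{e-1}\equiv-1\pmod{n/2}$; $s\sigma(u,e-1)\equiv u+2r+1\pmod{n/2}$; and $r\xi(u,e-1)\equiv s\zeta(u,e-1)-1\pmod{n/2}$.
   Context: $D_n=\langle a,b\mid a^n=b^2=1,\ b^{-1}ab=a^{-1}\rangle$. A skew-morphism of a finite group $A$ is a permutation $\varphi$ of the set $A$ with $\varphi(1)=1$ for which there exists a function $\pi:A\to\mathbb{Z}_k$, where $k$ is the order of $\varphi$, such that $\varphi(xy)=\varphi(x)\varphi^{\pi(x)}(y)$ for all $x,y\in A$; $\pi$ is the power function. The kernel is $\mathrm{Ker}\,\varphi=\{x:\pi(x)=1\}$, and the core is $\mathrm{Core}\,\varphi=\bigcap_{i=1}^k\varphi^i(\mathrm{Ker}\,\varphi)$. $\varphi$ is smooth if $\varphi(x)\in x\,\mathrm{Core}\,\varphi$ for all $x$. For integers $u$ and $j\ge0$: $\sigma(u,j)=\sum_{i=1}^{j}u^{i-1}$, $\xi(u,j)=\sum_{i=1}^{j}(-u)^{i-1}$, and for even $j$, $\zeta(u,j)=\sum_{i=1}^{j/2}u^{2(i-1)}$. *)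

theory Defs
  imports "HOL-Algebra.Algebra" "HOL-Number_Theory.Cong"
begin

text \<open>The dihedral group D_n of order 2n. The element (f, j) represents b^f a^j
  (f = False: a^j, f = True: b a^j), with j taken in {0..n-1}.
  Multiplication uses a^i b = b a^{-i}.\<close>
definition dihedral :: "nat \<Rightarrow> (bool \<times> int) monoid" where
  "dihedral n = \<lparr> carrier = (UNIV :: bool set) \<times> {0..<int n},
     monoid.mult = (\<lambda>(f, i) (g, j). (f \<noteq> g, ((if g then - i else i) + j) mod int n)),
     one = (False, 0) \<rparr>"

definition da :: "nat \<Rightarrow> int \<Rightarrow> bool \<times> int" where
  "da n m = (False, m mod int n)"

definition dba :: "nat \<Rightarrow> int \<Rightarrow> bool \<times> int" where
  "dba n m = (True, m mod int n)"

definition perm_order :: "('a, 'b) monoid_scheme \<Rightarrow> ('a \<Rightarrow> 'a) \<Rightarrow> nat" where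
  "perm_order G \<phi> = (LEAST k. 0 < k \<and> (\<forall>x\<in>carrier G. (\<phi> ^^ k) x = x))"

text \<open>Skew-morphism with power function \<pi> (values in {0..k-1} representing Z_k).\<close>
definition skew_morphism ::
    "('a, 'b) monoid_scheme \<Rightarrow> ('a \<Rightarrow> 'a) \<Rightarrow> ('a \<Rightarrow> nat) \<Rightarrow> bool" where
  "skew_morphism G \<phi> \<pi> \<longleftrightarrow>
     bij_betw \<phi> (carrier G) (carrier G) \<and> \<phi> \<one>\<^bsub>G\<^esub> = \<one>\<^bsub>G\<^esub> \<and>
     (\<forall>x\<in>carrier G. \<pi> x < perm_order G \<phi>) \<and>
     (\<forall>x\<in>carrier G. \<forall>y\<in>carrier G.
        \<phi> (x \<otimes>\<^bsub>G\<^esub> y) = \<phi> x \<otimes>\<^bsub>G\<^esub> (\<phi> ^^ \<pi> x) y)"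

definition skew_kernel ::
    "('a, 'b) monoid_scheme \<Rightarrow> ('a \<Rightarrow> 'a) \<Rightarrow> ('a \<Rightarrow> nat) \<Rightarrow> 'a set" where
  "skew_kernel G \<phi> \<pi> = {x \<in> carrier G. [\<pi> x = 1] (mod perm_order G \<phi>)}"

definition skew_core ::
    "('a, 'b) monoid_scheme \<Rightarrow> ('a \<Rightarrow> 'a) \<Rightarrow> ('a \<Rightarrow> nat) \<Rightarrow> 'a set" where
  "skew_core G \<phi> \<pi> = (\<Inter>i\<in>{1..perm_order G \<phi>}. (\<phi> ^^ i) ` skew_kernel G \<phi> \<pi>)"

definition smooth_skew ::
    "('a, 'b) monoid_scheme \<Rightarrow> ('a \<Rightarrow> 'a) \<Rightarrow> ('a \<Rightarrow> nat) \<Rightarrow> bool" where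
  "smooth_skew G \<phi> \<pi> \<longleftrightarrow> skew_morphism G \<phi> \<pi> \<and>
     (\<forall>x\<in>carrier G. \<phi> x \<in> x <#\<^bsub>G\<^esub> skew_core G \<phi> \<pi>)"

definition sigma :: "int \<Rightarrow> nat \<Rightarrow> int" where
  "sigma u j = (\<Sum>i=1..j. u ^ (i - 1))"

definition xi :: "int \<Rightarrow> nat \<Rightarrow> int" where
  "xi u j = (\<Sum>i=1..j. (- u) ^ (i - 1))"

text \<open>Only used for even j.\<close>
definition zeta :: "int \<Rightarrow> nat \<Rightarrow> int" where
  "zeta u j = (\<Sum>i=1..j div 2. u ^ (2 * (i - 1)))"

end

theory Submission
  imports Defs
begin

lemma dih_carrier: "carrier (dihedral n) = UNIV \<times> {0..<int n}"
  by (simp add: dihedral_def)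
lemma dih_mult: "(f,i) \<otimes>\<^bsub>dihedral n\<^esub> (g,j) = (f \<noteq> g, ((if g then - i else i) + j) mod int n)"
  by (simp add: dihedral_def)
lemma dih_one: "\<one>\<^bsub>dihedral n\<^esub> = (False, 0)"
  by (simp add: dihedral_def)

lemma dih_assoc: "(x \<otimes>\<^bsub>dihedral n\<^esub> y) \<otimes>\<^bsub>dihedral n\<^esub> z = x \<otimes>\<^bsub>dihedral n\<^esub> (y \<otimes>\<^bsub>dihedral n\<^esub> z)"
proof -
  obtain f i g j h l where xyz: "x = (f,i)" "y = (g,j)" "z = (h,l)" by (metis prod.exhaust)
  show ?thesis unfolding xyz dih_mult
    by (cases g; cases h; simp add: mod_add_left_eq mod_add_right_eq mod_minus_eq algebra_simps mod_diff_left_eq mod_diff_right_eq)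
qed

lemma dih_group: assumes "0 < n" shows "group (dihedral n)"
proof (rule groupI)
  show "\<one>\<^bsub>dihedral n\<^esub> \<in> carrier (dihedral n)" using assms by (simp add: dih_one dih_carrier)
  fix x y assume "x \<in> carrier (dihedral n)" "y \<in> carrier (dihedral n)"
  then show "x \<otimes>\<^bsub>dihedral n\<^esub> y \<in> carrier (dihedral n)" using assms
    by (cases x; cases y; simp add: dih_carrier dih_mult)
next
  fix x y z show "x \<otimes>\<^bsub>dihedral n\<^esub> y \<otimes>\<^bsub>dihedral n\<^esub> z = x \<otimes>\<^bsub>dihedral n\<^esub> (y \<otimes>\<^bsub>dihedral n\<^esub> z)"
    by (rule dih_assoc)
next
  fix x assume "x \<in> carrier (dihedral n)"
  then show "\<one>\<^bsub>dihedral n\<^esub> \<otimes>\<^bsub>dihedral n\<^esub> x = x"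
    by (cases x; auto simp: dih_one dih_mult dih_carrier)
next
  fix x assume x: "x \<in> carrier (dihedral n)"
  obtain f i where xf: "x = (f,i)" by (metis prod.exhaust)
  have "(f, if f then i else (- i) mod int n) \<otimes>\<^bsub>dihedral n\<^esub> x = \<one>\<^bsub>dihedral n\<^esub>"
  proof (cases f)
    case True then show ?thesis by (simp add: xf dih_mult dih_one)
  next
    case False
    have "((- i) mod int n + i) mod int n = (- i + i) mod int n" by (rule mod_add_left_eq)
    then show ?thesis using False by (simp add: xf dih_mult dih_one)
  qed
  moreover have "(f, if f then i else (- i) mod int n) \<in> carrier (dihedral n)"
    using x assms by (simp add: xf dih_carrier)
  ultimately show "\<exists>y\<in>carrier (dihedral n). y \<otimes>\<^bsub>dihedral n\<^esub> x = \<one>\<^bsub>dihedral n\<^esub>" by blast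
qed


lemma da_mult_da: "da n t \<otimes>\<^bsub>dihedral n\<^esub> da n t' = da n (t + t')"
  by (simp add: da_def dih_mult mod_add_left_eq mod_add_right_eq)
lemma da_mult_dba: "da n t \<otimes>\<^bsub>dihedral n\<^esub> dba n t' = dba n (t' - t)"
  by (simp add: da_def dba_def dih_mult mod_add_left_eq mod_add_right_eq mod_minus_eq)
     (metis add.commute diff_conv_add_uminus mod_add_left_eq mod_minus_eq)
lemma dba_mult_da: "dba n t \<otimes>\<^bsub>dihedral n\<^esub> da n t' = dba n (t + t')"
  by (simp add: da_def dba_def dih_mult mod_add_left_eq mod_add_right_eq)
lemma dba_mult_dba: "dba n t \<otimes>\<^bsub>dihedral n\<^esub> dba n t' = da n (t' - t)"
  by (simp add: da_def dba_def dih_mult mod_add_left_eq mod_add_right_eq mod_minus_eq)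
     (metis add.commute diff_conv_add_uminus mod_add_left_eq mod_minus_eq)
lemmas dmult = da_mult_da da_mult_dba dba_mult_da dba_mult_dba

lemma da_carrier: "0 < n \<Longrightarrow> da n t \<in> carrier (dihedral n)"
  by (simp add: da_def dih_carrier)
lemma dba_carrier: "0 < n \<Longrightarrow> dba n t \<in> carrier (dihedral n)"
  by (simp add: dba_def dih_carrier)
lemma da_eq: "da n t = da n t' \<longleftrightarrow> [t = t'] (mod int n)"
  by (simp add: da_def cong_def)
lemma dba_eq: "dba n t = dba n t' \<longleftrightarrow> [t = t'] (mod int n)"
  by (simp add: dba_def cong_def)
lemma da_ne_dba: "da n t \<noteq> dba n t'" "dba n t' \<noteq> da n t"
  by (simp_all add: da_def dba_def)
lemma one_da: "\<one>\<^bsub>dihedral n\<^esub> = da n 0"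
  by (simp add: da_def dih_one)

lemma carrier_cases:
  assumes "x \<in> carrier (dihedral n)"
  obtains t where "x = da n (2*t)" | t where "x = dba n (2*t)"
    | t where "x = da n (2*t+1)" | t where "x = dba n (2*t+1)"
proof -
  obtain f i where x: "x = (f,i)" and i: "0 \<le> i" "i < int n"
    using assms by (cases x) (auto simp: dih_carrier)
  have im: "i mod int n = i" using i by simp
  have ii: "i = 2 * (i div 2) + i mod 2" by simp
  consider "i mod 2 = 0" | "i mod 2 = 1" by linarith
  then show ?thesis
  proof cases
    case 1
    then have "i = 2 * (i div 2)" using ii by linarith
    then have "x = (if f then dba n (2*(i div 2)) else da n (2*(i div 2)))"
      using im x by (simp add: da_def dba_def)
    then show ?thesis using that by (cases f) auto
  next
    case 2
    then have "i = 2 * (i div 2) + 1" using ii by linarith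
    then have "x = (if f then dba n (2*(i div 2)+1) else da n (2*(i div 2)+1))"
      using im x by (simp add: da_def dba_def)
    then show ?thesis using that by (cases f) auto
  qed
qed

lemma cong_2: "[2*x = 2*y] (mod 2*m) \<longleftrightarrow> [x = (y::int)] (mod m)"
  by (simp add: cong_def mod_mult_mult1)


lemma sigma_0[simp]: "sigma u 0 = 0" by (simp add: sigma_def)
lemma sigma_Suc: "sigma u (Suc j) = sigma u j + u ^ j" by (simp add: sigma_def)
lemma sigma_alt: "sigma u j = (\<Sum>i<j. u ^ i)"
  by (induction j) (simp_all add: sigma_Suc)
lemma sigma_Suc2: "sigma u (Suc j) = 1 + u * sigma u j"
proof -
  have "sigma u (Suc j) = 1 + (\<Sum>i<j. u^(Suc i))" unfolding sigma_alt by (simp only: sum.lessThan_Suc_shift) simp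
  also have "(\<Sum>i<j. u^(Suc i)) = u * (\<Sum>i<j. u^i)" by (simp add: sum_distrib_left)
  finally show ?thesis by (simp add: sigma_alt)
qed
lemma sigma_pow: "u ^ j - 1 = (u - 1) * sigma u j"
  unfolding sigma_alt by (rule power_diff_1_eq)
lemma sigma_add: "sigma u (p + q) = sigma u p + u ^ p * sigma u q"
  by (induction q) (simp_all add: sigma_Suc algebra_simps power_add)

lemma zeta_0[simp]: "zeta u 0 = 0" by (simp add: zeta_def)
lemma zeta_Suc: "zeta u (2 * Suc l) = zeta u (2 * l) + u ^ (2 * l)" unfolding zeta_def by simp
lemma zeta_alt: "zeta u (2 * l) = (\<Sum>i<l. u ^ (2 * i))"
proof (induction l)
  case 0 then show ?case by simp
next
  case (Suc l) then show ?case using zeta_Suc[of u l] by simp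
qed
lemma zeta_Suc2: "zeta u (2 * Suc l) = 1 + u^2 * zeta u (2 * l)"
proof -
  have "zeta u (2 * Suc l) = 1 + (\<Sum>i<l. u^(2 * Suc i))" unfolding zeta_alt by (simp only: sum.lessThan_Suc_shift) simp
  also have "(\<Sum>i<l. u^(2 * Suc i)) = u^2 * (\<Sum>i<l. u^(2*i))" by (simp add: sum_distrib_left mult_Suc_right power_add power2_eq_square mult.assoc)
  finally show ?thesis by (simp add: zeta_alt)
qed
lemma zeta_add: "zeta u (2 * (p + q)) = zeta u (2 * p) + u ^ (2 * p) * zeta u (2 * q)"
proof (induction q)
  case 0 then show ?case by simp
next
  case (Suc q)
  have "zeta u (2 * (p + Suc q)) = zeta u (2 * Suc (p + q))" by simp
  also have "\<dots> = zeta u (2 * (p + q)) + u ^ (2 * (p + q))" by (rule zeta_Suc)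
  also have "\<dots> = zeta u (2 * p) + u ^ (2 * p) * (zeta u (2 * q) + u ^ (2 * q))"
    using Suc.IH by (simp add: algebra_simps power_add)
  also have "zeta u (2 * q) + u ^ (2 * q) = zeta u (2 * Suc q)" by (rule zeta_Suc[symmetric])
  finally show ?case .
qed
lemma xi_Suc: "xi u (Suc j) = xi u j + (- u) ^ j" by (simp add: xi_def)
lemma xi_zeta: "xi u (2 * l) = (1 - u) * zeta u (2 * l)"
proof (induction l)
  case 0 then show ?case by (simp add: xi_def)
next
  case (Suc l)
  have "xi u (2 * Suc l) = xi u (Suc (Suc (2 * l)))" by simp
  also have "\<dots> = xi u (2*l) + (-u)^(2*l) + (-u)^(Suc (2*l))" by (simp only: xi_Suc)
  also have "(-u)^(2*l) = u^(2*l)" by (simp add: power_mult)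
  also have "(-u)^(Suc (2*l)) = - u * u^(2*l)" by (simp add: power_mult)
  finally show ?case using Suc.IH zeta_Suc[of u l] by (simp add: algebra_simps)
qed

lemma dvd_comb: "(q::int) dvd a \<Longrightarrow> q dvd b \<Longrightarrow> z = c*a + d*b \<Longrightarrow> q dvd z"
  by simp

locale sk =
  fixes n :: nat and \<phi> :: "bool \<times> int \<Rightarrow> bool \<times> int" and \<pi> :: "bool \<times> int \<Rightarrow> nat"
  assumes n8: "n \<ge> 8" and neven: "even n"
    and smooth: "smooth_skew (dihedral n) \<phi> \<pi>"
    and ker: "skew_kernel (dihedral n) \<phi> \<pi> = generate (dihedral n) {da n 2, dba n 0}"
begin

abbreviation "G \<equiv> dihedral n"
abbreviation "C \<equiv> carrier (dihedral n)"
abbreviation "k \<equiv> perm_order (dihedral n) \<phi>"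
definition "m = int (n div 2)"
definition "Kset = {x. \<exists>t. x = da n (2*t) \<or> x = dba n (2*t)}"

lemma npos: "0 < n" using n8 by simp
lemma nm: "int n = 2 * m" using neven by (auto simp: m_def elim!: evenE)
lemma m4: "m \<ge> 4" using n8 neven by (simp add: m_def)
lemma grp: "group G" by (rule dih_group[OF npos])
lemma dac[simp]: "da n t \<in> C" by (rule da_carrier[OF npos])
lemma dbac[simp]: "dba n t \<in> C" by (rule dba_carrier[OF npos])

lemma skew: "bij_betw \<phi> C C" "\<phi> \<one>\<^bsub>G\<^esub> = \<one>\<^bsub>G\<^esub>" "\<And>x. x \<in> C \<Longrightarrow> \<pi> x < k"
   "\<And>x y. x \<in> C \<Longrightarrow> y \<in> C \<Longrightarrow> \<phi> (x \<otimes>\<^bsub>G\<^esub> y) = \<phi> x \<otimes>\<^bsub>G\<^esub> (\<phi> ^^ \<pi> x) y"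
  using smooth by (auto simp: smooth_skew_def skew_morphism_def)

lemma finC: "finite C" by (simp add: dih_carrier)

lemma pow_bij: "bij_betw (\<phi> ^^ j) C C" using skew(1) by (rule bij_betw_funpow)
lemma pow_C[simp]: "x \<in> C \<Longrightarrow> (\<phi> ^^ j) x \<in> C"
  using pow_bij bij_betwE by blast
lemma phi_C[simp]: "x \<in> C \<Longrightarrow> \<phi> x \<in> C"
  using pow_C[of x 1] by simp

lemma ex_period: "\<exists>j>0. \<forall>x\<in>C. (\<phi> ^^ j) x = x"
proof -
  define F where "F j = restrict (\<phi> ^^ j) C" for j
  have "range F \<subseteq> C \<rightarrow>\<^sub>E C" by (auto simp: F_def)
  moreover have "finite (C \<rightarrow>\<^sub>E C)" using finC by (intro finite_PiE) auto
  ultimately have "finite (range F)" by (rule finite_subset)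
  then have "\<not> inj F" using finite_imageD infinite_UNIV_nat by blast
  then obtain i j where ij: "F i = F j" "i < j"
    unfolding inj_def by (metis linorder_neqE_nat)
  have "\<forall>x\<in>C. (\<phi> ^^ (j - i)) x = x"
  proof
    fix x assume x: "x \<in> C"
    have "(\<phi> ^^ i) ((\<phi> ^^ (j - i)) x) = (\<phi> ^^ j) x"
      using ij(2) by (simp add: funpow_add[symmetric, THEN fun_cong, simplified comp_def])
    also have "\<dots> = (\<phi> ^^ i) x" using ij(1) x unfolding F_def by (metis restrict_apply')
    finally show "(\<phi> ^^ (j - i)) x = x"
      using pow_bij[of i] x unfolding bij_betw_def inj_on_def by (meson pow_C)
  qed
  then show ?thesis using ij(2) by (intro exI[of _ "j - i"]) auto
qed

lemma k_prop: "0 < k \<and> (\<forall>x\<in>C. (\<phi> ^^ k) x = x)"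
  unfolding perm_order_def using LeastI_ex[OF ex_period] .
lemma k_pos: "0 < k" using k_prop by blast
lemma k_id: "x \<in> C \<Longrightarrow> (\<phi> ^^ k) x = x" using k_prop by blast
lemma k_least: "0 < j \<Longrightarrow> \<forall>x\<in>C. (\<phi> ^^ j) x = x \<Longrightarrow> k \<le> j"
  unfolding perm_order_def by (rule Least_le) blast

lemma k_mult_id: "x \<in> C \<Longrightarrow> (\<phi> ^^ (k * t)) x = x"
proof (induction t)
  case 0 then show ?case by simp
next
  case (Suc t)
  have "(\<phi> ^^ (k * Suc t)) x = (\<phi> ^^ k) ((\<phi> ^^ (k * t)) x)"
    by (simp add: funpow_add add.commute)
  then show ?case using Suc by (simp add: k_id)
qed

lemma pow_dvd: assumes "\<forall>x\<in>C. (\<phi> ^^ p) x = x" shows "k dvd p"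
proof -
  have "\<forall>x\<in>C. (\<phi> ^^ (p mod k)) x = x"
  proof
    fix x assume x: "x \<in> C"
    have "(\<phi> ^^ p) x = (\<phi> ^^ (p mod k + k * (p div k))) x" by simp
    also have "\<dots> = (\<phi> ^^ (p mod k)) ((\<phi> ^^ (k * (p div k))) x)"
      by (simp only: funpow_add comp_apply)
    finally have "(\<phi> ^^ p) x = (\<phi> ^^ (p mod k)) ((\<phi> ^^ (k * (p div k))) x)" .
    then show "(\<phi> ^^ (p mod k)) x = x" using x assms k_mult_id by simp
  qed
  then have "\<not> 0 < p mod k" using k_least[of "p mod k"] k_pos by (meson mod_less_divisor not_le)
  then show ?thesis by (simp add: dvd_eq_mod_eq_0)
qed

lemma pow_diff_id: assumes "q \<le> p" "\<forall>x\<in>C. (\<phi> ^^ p) x = (\<phi> ^^ q) x"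
  shows "\<forall>y\<in>C. (\<phi> ^^ (p - q)) y = y"
proof
  fix y assume y: "y \<in> C"
  obtain x where x: "x \<in> C" "y = (\<phi> ^^ q) x" using pow_bij[of q] y
    by (metis bij_betw_imp_surj_on imageE)
  have "(\<phi> ^^ (p - q)) y = (\<phi> ^^ (p - q + q)) x" using x(2)
    by (simp only: funpow_add comp_apply)
  also have "p - q + q = p" using assms(1) by simp
  finally have "(\<phi> ^^ (p - q)) y = (\<phi> ^^ p) x" .
  then show "(\<phi> ^^ (p - q)) y = y" using assms(2) x by simp
qed

lemma pow_eq_cong: assumes "\<forall>x\<in>C. (\<phi> ^^ p) x = (\<phi> ^^ q) x" shows "[p = q] (mod k)"
proof (cases "q \<le> p")
  case True
  then have "k dvd (p - q)" using pow_diff_id[OF True assms] pow_dvd by blast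
  then show ?thesis using True by (simp add: cong_altdef_nat cong_sym_eq)
next
  case False
  then have "k dvd (q - p)" using pow_diff_id[of p q] assms pow_dvd by auto
  then have "[q = p] (mod k)" using False by (simp add: cong_altdef_nat)
  then show ?thesis by (rule cong_sym)
qed

lemma pow_eq: assumes "p < k" "q < k" "\<forall>x\<in>C. (\<phi> ^^ p) x = (\<phi> ^^ q) x" shows "p = q"
  using pow_eq_cong[OF assms(3)] assms(1,2) by (simp add: cong_def)


lemma even_mod_n: "even (t mod int n) \<longleftrightarrow> even t"
  using nm by (metis dvd_triv_left even_mod_2_iff mod_mod_cancel)

lemma da_K: "da n t \<in> Kset \<longleftrightarrow> even t"
proof
  assume "da n t \<in> Kset"
  then obtain s where "da n t = da n (2*s)" by (auto simp: Kset_def da_ne_dba)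
  then have "t mod int n = (2*s) mod int n" by (simp add: da_def)
  then show "even t" using even_mod_n by (metis dvd_triv_left)
qed (auto simp: Kset_def elim!: evenE)

lemma dba_K: "dba n t \<in> Kset \<longleftrightarrow> even t"
proof
  assume "dba n t \<in> Kset"
  then obtain s where "dba n t = dba n (2*s)" by (auto simp: Kset_def da_ne_dba)
  then have "t mod int n = (2*s) mod int n" by (simp add: dba_def)
  then show "even t" using even_mod_n by (metis dvd_triv_left)
qed (auto simp: Kset_def elim!: evenE)

lemma KC: "Kset \<subseteq> C" by (auto simp: Kset_def)

lemma K_subgroup: "subgroup Kset G"
proof (rule group.subgroupI[OF grp KC])
  show "Kset \<noteq> {}" using da_K[of 0] by auto
next
  fix x assume "x \<in> Kset"
  then obtain t where "x = da n (2*t) \<or> x = dba n (2*t)" by (auto simp: Kset_def)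
  then show "inv\<^bsub>G\<^esub> x \<in> Kset"
  proof
    assume x: "x = da n (2*t)"
    have "inv\<^bsub>G\<^esub> x = da n (2*(-t))"
      by (rule group.inv_equality[OF grp]) (auto simp: x dmult one_da)
    then show ?thesis by (simp add: da_K)
  next
    assume x: "x = dba n (2*t)"
    have "inv\<^bsub>G\<^esub> x = dba n (2*t)"
      by (rule group.inv_equality[OF grp]) (auto simp: x dmult one_da)
    then show ?thesis by (simp add: Kset_def) blast
  qed
next
  fix x y assume "x \<in> Kset" "y \<in> Kset"
  then obtain t t' where "x = da n (2*t) \<or> x = dba n (2*t)" "y = da n (2*t') \<or> y = dba n (2*t')"
    unfolding Kset_def by blast
  then show "x \<otimes>\<^bsub>G\<^esub> y \<in> Kset"
    by (auto simp: dmult da_K dba_K)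
qed

lemma gen_eq: "generate G {da n 2, dba n 0} = Kset"
proof
  show "generate G {da n 2, dba n 0} \<subseteq> Kset"
    by (rule group.generate_subgroup_incl[OF grp _ K_subgroup])
       (auto simp: da_K dba_K)
next
  have nat_in: "da n (2 * int j) \<in> generate G {da n 2, dba n 0}" for j
  proof (induction j)
    case 0 then show ?case using generate.one[of G] by (simp add: one_da)
  next
    case (Suc j)
    have "da n 2 \<otimes>\<^bsub>G\<^esub> da n (2 * int j) \<in> generate G {da n 2, dba n 0}"
      by (rule generate.eng[OF generate.incl Suc]) simp
    then show ?case by (simp add: dmult algebra_simps)
  qed
  have da_in: "da n (2 * t) \<in> generate G {da n 2, dba n 0}" for t
  proof -
    have "0 \<le> t mod m" using m4 by simp
    then have "t mod m = int (nat (t mod m))" by simp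
    moreover have "da n (2*t) = da n (2 * (t mod m))"
      using m4 nm by (simp add: da_eq cong_2 cong_def)
    ultimately show ?thesis using nat_in by metis
  qed
  show "Kset \<subseteq> generate G {da n 2, dba n 0}"
  proof
    fix x assume "x \<in> Kset"
    then obtain t where "x = da n (2*t) \<or> x = dba n (2*t)" by (auto simp: Kset_def)
    then show "x \<in> generate G {da n 2, dba n 0}"
    proof
      assume "x = dba n (2*t)"
      moreover have "dba n 0 \<otimes>\<^bsub>G\<^esub> da n (2*t) \<in> generate G {da n 2, dba n 0}"
        by (rule generate.eng[OF generate.incl da_in]) simp
      ultimately show ?thesis by (simp add: dmult)
    qed (use da_in in auto)
  qed
qed

lemma kerK: "x \<in> Kset \<longleftrightarrow> x \<in> C \<and> [\<pi> x = 1] (mod k)"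
proof -
  have "{x \<in> C. [\<pi> x = 1] (mod k)} = Kset" using ker gen_eq by (simp add: skew_kernel_def)
  then show ?thesis by blast
qed

lemma a_notK: "da n 1 \<notin> Kset" by (simp add: da_K)

lemma k2: "k \<ge> 2"
proof -
  have "k \<noteq> 1" using a_notK kerK by (metis cong_1 dac)
  then show ?thesis using k_pos by linarith
qed

lemma piK: "x \<in> Kset \<Longrightarrow> \<pi> x = 1"
  using kerK skew(3)[of x] k2 by (auto simp: cong_def)

lemma homK: "x \<in> Kset \<Longrightarrow> y \<in> C \<Longrightarrow> \<phi> (x \<otimes>\<^bsub>G\<^esub> y) = \<phi> x \<otimes>\<^bsub>G\<^esub> \<phi> y"
  using skew(4)[of x y] piK KC by auto


lemma coreK: "skew_core G \<phi> \<pi> \<subseteq> Kset"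
proof
  fix x assume "x \<in> skew_core G \<phi> \<pi>"
  then have "x \<in> (\<phi> ^^ k) ` skew_kernel G \<phi> \<pi>"
    using k_pos unfolding skew_core_def by auto
  then show "x \<in> Kset" using ker gen_eq KC k_id by auto
qed

lemma coset: "x \<in> C \<Longrightarrow> \<exists>h\<in>Kset. \<phi> x = x \<otimes>\<^bsub>G\<^esub> h"
  using smooth coreK unfolding smooth_skew_def l_coset_def by blast

lemma phiK: assumes x: "x \<in> C" shows "\<phi> x \<in> Kset \<longleftrightarrow> x \<in> Kset"
proof -
  obtain h where h: "h \<in> Kset" "\<phi> x = x \<otimes>\<^bsub>G\<^esub> h" using coset[OF x] by blast
  obtain t where ht: "h = da n (2*t) \<or> h = dba n (2*t)" using h(1) by (auto simp: Kset_def)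
  have "x \<otimes>\<^bsub>G\<^esub> h \<in> Kset \<longleftrightarrow> x \<in> Kset" using x
    by (cases rule: carrier_cases) (use ht in \<open>auto simp: dmult da_K dba_K\<close>)
  then show ?thesis using h(2) by simp
qed


lemma powK: "x \<in> C \<Longrightarrow> (\<phi> ^^ j) x \<in> Kset \<longleftrightarrow> x \<in> Kset"
proof (induction j)
  case 0 then show ?case by simp
next
  case (Suc j)
  have "(\<phi> ^^ Suc j) x = \<phi> ((\<phi> ^^ j) x)" by simp
  then show ?case using phiK[of "(\<phi> ^^ j) x"] Suc by simp
qed

lemma homKpow: "x \<in> Kset \<Longrightarrow> y \<in> C \<Longrightarrow> (\<phi> ^^ j) (x \<otimes>\<^bsub>G\<^esub> y) = (\<phi> ^^ j) x \<otimes>\<^bsub>G\<^esub> (\<phi> ^^ j) y"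
proof (induction j)
  case 0 then show ?case by simp
next
  case (Suc j)
  have "(\<phi> ^^ j) x \<in> Kset" using Suc powK KC by blast
  moreover have "(\<phi> ^^ j) y \<in> C" using Suc by simp
  ultimately have "\<phi> ((\<phi> ^^ j) x \<otimes>\<^bsub>G\<^esub> (\<phi> ^^ j) y) = \<phi> ((\<phi> ^^ j) x) \<otimes>\<^bsub>G\<^esub> \<phi> ((\<phi> ^^ j) y)"
    by (rule homK)
  then show ?case using Suc by simp
qed

lemma mC: "x \<in> C \<Longrightarrow> y \<in> C \<Longrightarrow> x \<otimes>\<^bsub>G\<^esub> y \<in> C"
  by (rule monoid.m_closed[OF group.is_monoid[OF grp]])

lemma lcanc: assumes "a \<in> C" "b \<in> C" "c \<in> C" "a \<otimes>\<^bsub>G\<^esub> b = a \<otimes>\<^bsub>G\<^esub> c" shows "b = c"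
proof -
  have "a \<in> Units G" using group.Units_eq[OF grp] assms(1) by simp
  then show ?thesis using monoid.Units_l_cancel[OF group.is_monoid[OF grp]] assms(2-4) by blast
qed

lemma piKmult: assumes x: "x \<in> Kset" and y: "y \<in> C" shows "\<pi> (x \<otimes>\<^bsub>G\<^esub> y) = \<pi> y"
proof -
  have xC: "x \<in> C" using x KC by blast
  have xyC: "x \<otimes>\<^bsub>G\<^esub> y \<in> C" using xC y by (rule mC)
  have "\<forall>z\<in>C. (\<phi> ^^ \<pi> (x \<otimes>\<^bsub>G\<^esub> y)) z = (\<phi> ^^ \<pi> y) z"
  proof
    fix z assume z: "z \<in> C"
    have "\<phi> ((x \<otimes>\<^bsub>G\<^esub> y) \<otimes>\<^bsub>G\<^esub> z) = (\<phi> x \<otimes>\<^bsub>G\<^esub> \<phi> y) \<otimes>\<^bsub>G\<^esub> (\<phi> ^^ \<pi> (x \<otimes>\<^bsub>G\<^esub> y)) z"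
      using skew(4)[OF xyC z] homK[OF x y] by simp
    also have "\<dots> = \<phi> x \<otimes>\<^bsub>G\<^esub> (\<phi> y \<otimes>\<^bsub>G\<^esub> (\<phi> ^^ \<pi> (x \<otimes>\<^bsub>G\<^esub> y)) z)"
      by (rule dih_assoc)
    finally have 1: "\<phi> ((x \<otimes>\<^bsub>G\<^esub> y) \<otimes>\<^bsub>G\<^esub> z) = \<phi> x \<otimes>\<^bsub>G\<^esub> (\<phi> y \<otimes>\<^bsub>G\<^esub> (\<phi> ^^ \<pi> (x \<otimes>\<^bsub>G\<^esub> y)) z)" .
    have "\<phi> ((x \<otimes>\<^bsub>G\<^esub> y) \<otimes>\<^bsub>G\<^esub> z) = \<phi> (x \<otimes>\<^bsub>G\<^esub> (y \<otimes>\<^bsub>G\<^esub> z))"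
      by (simp add: dih_assoc)
    also have "\<dots> = \<phi> x \<otimes>\<^bsub>G\<^esub> \<phi> (y \<otimes>\<^bsub>G\<^esub> z)" using homK[OF x mC[OF y z]] .
    also have "\<dots> = \<phi> x \<otimes>\<^bsub>G\<^esub> (\<phi> y \<otimes>\<^bsub>G\<^esub> (\<phi> ^^ \<pi> y) z)" using skew(4)[OF y z] by simp
    finally have 2: "\<phi> ((x \<otimes>\<^bsub>G\<^esub> y) \<otimes>\<^bsub>G\<^esub> z) = \<phi> x \<otimes>\<^bsub>G\<^esub> (\<phi> y \<otimes>\<^bsub>G\<^esub> (\<phi> ^^ \<pi> y) z)" .
    have "\<phi> y \<otimes>\<^bsub>G\<^esub> (\<phi> ^^ \<pi> (x \<otimes>\<^bsub>G\<^esub> y)) z = \<phi> y \<otimes>\<^bsub>G\<^esub> (\<phi> ^^ \<pi> y) z"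
      by (rule lcanc[of "\<phi> x"]) (use 1 2 xC y z mC in auto)
    then show "(\<phi> ^^ \<pi> (x \<otimes>\<^bsub>G\<^esub> y)) z = (\<phi> ^^ \<pi> y) z"
      by (rule lcanc[rotated 3]) (use y z in auto)
  qed
  then show ?thesis using pow_eq skew(3) xyC y by blast
qed

definition "e0 = \<pi> (da n 1)"

lemma pi_odd: assumes y: "y \<in> C" "y \<notin> Kset" shows "\<pi> y = e0"
  using y(1)
proof (cases rule: carrier_cases)
  case (1 t)
  then show ?thesis using y(2) by (simp add: da_K)
next
  case (2 t)
  then show ?thesis using y(2) by (simp add: dba_K)
next
  case (3 t)
  then have "y = da n (2*t) \<otimes>\<^bsub>G\<^esub> da n 1" by (simp add: dmult)
  then show ?thesis using piKmult[of "da n (2*t)" "da n 1"] by (simp add: e0_def da_K)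
next
  case (4 t)
  then have "y = dba n (2*t) \<otimes>\<^bsub>G\<^esub> da n 1" by (simp add: dmult)
  then show ?thesis using piKmult[of "dba n (2*t)" "da n 1"] by (simp add: e0_def dba_K)
qed


lemma C_form: assumes "x \<in> C"
  shows "0 \<le> snd x" "snd x < 2*m" "x = (if fst x then dba n (snd x) else da n (snd x))"
proof -
  obtain f i where x: "x = (f,i)" "0 \<le> i" "i < int n" using assms by (cases x) (auto simp: dih_carrier)
  then show "0 \<le> snd x" "snd x < 2*m" using nm by auto
  show "x = (if fst x then dba n (snd x) else da n (snd x))" using x by (simp add: da_def dba_def)
qed

lemma K_iff: assumes "x \<in> C" shows "x \<in> Kset \<longleftrightarrow> even (snd x)"
proof (cases "fst x")
  case True then have "x = dba n (snd x)" using C_form(3)[OF assms] by simp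
  then show ?thesis by (metis dba_K)
next
  case False then have "x = da n (snd x)" using C_form(3)[OF assms] by simp
  then show ?thesis by (metis da_K)
qed

lemma da_eqD: "da n A = da n B \<Longrightarrow> A - B = 2 * Y \<Longrightarrow> m dvd Y"
  using nm by (simp add: da_eq cong_iff_dvd_diff)
lemma dba_eqD: "dba n A = dba n B \<Longrightarrow> A - B = 2 * Y \<Longrightarrow> m dvd Y"
  using nm by (simp add: dba_eq cong_iff_dvd_diff)
lemma da_eqI: "m dvd Y \<Longrightarrow> A - B = 2 * Y \<Longrightarrow> da n A = da n B"
  using nm by (simp add: da_eq cong_iff_dvd_diff)
lemma dba_eqI: "m dvd Y \<Longrightarrow> A - B = 2 * Y \<Longrightarrow> dba n A = dba n B"
  using nm by (simp add: dba_eq cong_iff_dvd_diff)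

lemma phi_one: "\<phi> (da n 0) = da n 0"
  using skew(2) by (simp add: one_da)

lemma phi_inj: "x \<in> C \<Longrightarrow> y \<in> C \<Longrightarrow> \<phi> x = \<phi> y \<Longrightarrow> x = y"
  using skew(1) unfolding bij_betw_def inj_on_def by blast

definition "u = snd (\<phi> (da n 2)) div 2"

lemma phi_a2: "\<phi> (da n 2) = da n (2*u)" "0 \<le> u" "u < m"
proof -
  define y where "y = \<phi> (da n 2)"
  have yC: "y \<in> C" and yK: "y \<in> Kset" using phiK[of "da n 2"] by (auto simp: y_def da_K)
  have ev: "even (snd y)"
    using yK K_iff[OF yC] by simp
  have f: "\<not> fst y"
  proof
    assume fy: "fst y"
    then have y: "y = dba n (snd y)" using C_form(3)[OF yC] by simp
    have "\<phi> (da n 4) = \<phi> (da n 2 \<otimes>\<^bsub>G\<^esub> da n 2)" by (simp add: dmult)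
    also have "\<dots> = y \<otimes>\<^bsub>G\<^esub> y" using homK[of "da n 2" "da n 2"] by (simp add: da_K y_def)
    also have "\<dots> = da n 0" by (subst y, subst y) (simp add: dmult)
    finally have "\<phi> (da n 4) = \<phi> (da n 0)" using phi_one by simp
    then have "da n 4 = da n 0" using phi_inj by simp
    then have "m dvd 2" using da_eqD[of 4 0 2] by simp
    then show False using m4 zdvd_imp_le by fastforce
  qed
  have "y = da n (snd y)" using C_form(3)[OF yC] f by simp
  moreover have "snd y = 2 * u" using ev by (simp add: u_def y_def)
  ultimately show "\<phi> (da n 2) = da n (2*u)" by (simp add: y_def)
  show "0 \<le> u" "u < m" using C_form(1,2)[OF yC] ev by (auto simp: u_def y_def)
qed

lemma phi_a2i_nat: "\<phi> (da n (2 * int j)) = da n (2 * int j * u)"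
proof (induction j)
  case 0 then show ?case using phi_one by simp
next
  case (Suc j)
  have "da n (2 * int (Suc j)) = da n 2 \<otimes>\<^bsub>G\<^esub> da n (2 * int j)" by (simp add: dmult algebra_simps)
  then have "\<phi> (da n (2 * int (Suc j))) = \<phi> (da n 2) \<otimes>\<^bsub>G\<^esub> \<phi> (da n (2 * int j))"
    using homK[of "da n 2" "da n (2 * int j)"] by (simp add: da_K)
  then show ?case using Suc phi_a2(1) by (simp add: dmult algebra_simps)
qed

lemma phi_a2i: "\<phi> (da n (2 * i)) = da n (2 * i * u)"
proof -
  have m0: "0 \<le> i mod m" using m4 by simp
  have "[i = i mod m] (mod m)" by (simp add: cong_def)
  then have "[2*i = 2*(i mod m)] (mod 2*m)" by (simp only: cong_2)
  then have "da n (2 * i) = da n (2 * int (nat (i mod m)))" using m0 by (simp add: da_eq nm)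
  moreover have "[(i mod m)*u = i*u] (mod m)" by (simp add: cong_def mod_mult_left_eq)
  then have "[2*((i mod m)*u) = 2*(i*u)] (mod 2*m)" by (simp only: cong_2)
  then have "da n (2 * int (nat (i mod m)) * u) = da n (2 * i * u)"
    using m0 by (simp add: da_eq nm mult.assoc)
  ultimately show ?thesis using phi_a2i_nat by metis
qed

lemma cop_u: "coprime u m"
proof (rule ccontr)
  assume nc: "\<not> coprime u m"
  define d where "d = gcd u m"
  have d1: "d \<noteq> 1" using nc by (simp add: d_def coprime_iff_gcd_eq_1)
  have dpos: "d > 0" using m4 by (simp add: d_def)
  have dm: "d dvd m" "d dvd u" by (simp_all add: d_def)
  then obtain i w where i: "m = d * i" and w: "u = d * w" by (auto elim!: dvdE)
  have ipos: "0 < i" using i dpos m4 by (metis zero_less_mult_pos not_less order_less_le_trans zero_less_numeral mult_zero_right linorder_not_less)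
  have ilt: "i < m" using i dpos d1 ipos by (simp add: i)
  have "\<phi> (da n (2*i)) = da n (2*i*u)" by (rule phi_a2i)
  also have "\<dots> = da n 0" by (rule da_eqI[of "m*w"]) (simp_all add: i w algebra_simps)
  finally have "\<phi> (da n (2*i)) = \<phi> (da n 0)" using phi_one by simp
  then have "da n (2*i) = da n 0" using phi_inj by simp
  then have "m dvd i" using da_eqD[of "2*i" 0 i] by simp
  then show False using ipos ilt zdvd_imp_le by fastforce
qed

definition "s = snd (\<phi> (dba n 0)) div 2"

lemma phi_b: "\<phi> (dba n 0) = dba n (2*s)" "0 \<le> s" "s < m"
proof -
  define y where "y = \<phi> (dba n 0)"
  have yC: "y \<in> C" and yK: "y \<in> Kset" using phiK[of "dba n 0"] by (auto simp: y_def dba_K)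
  have ev: "even (snd y)"
    using yK K_iff[OF yC] by simp
  have f: "fst y"
  proof (rule ccontr)
    assume fy: "\<not> fst y"
    then have y: "y = da n (snd y)" using C_form(3)[OF yC] by simp
    obtain z where z: "z \<in> C" "\<phi> z = dba n 0" using skew(1) dbac
      by (metis bij_betw_imp_surj_on imageE)
    have zK: "z \<in> Kset" using phiK[OF z(1)] z(2) by (simp add: dba_K)
    then obtain t where "z = da n (2*t) \<or> z = dba n (2*t)" by (auto simp: Kset_def)
    then show False
    proof
      assume "z = da n (2*t)"
      then show False using z(2) phi_a2i by (simp add: da_ne_dba)
    next
      assume zt: "z = dba n (2*t)"
      have "z = dba n 0 \<otimes>\<^bsub>G\<^esub> da n (2*t)" by (simp add: zt dmult)
      then have "\<phi> z = y \<otimes>\<^bsub>G\<^esub> \<phi> (da n (2*t))" using homK[of "dba n 0" "da n (2*t)"]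
        by (simp add: dba_K y_def)
      also have "\<dots> = da n (snd y + 2*t*u)" by (subst y) (simp add: phi_a2i dmult)
      finally show False using z(2) by (simp add: da_ne_dba)
    qed
  qed
  have "y = dba n (snd y)" using C_form(3)[OF yC] f by simp
  moreover have "snd y = 2 * s" using ev by (simp add: s_def y_def)
  ultimately show "\<phi> (dba n 0) = dba n (2*s)" by (simp add: y_def)
  show "0 \<le> s" "s < m" using C_form(1,2)[OF yC] ev by (auto simp: s_def y_def)
qed

lemma phi_b2i: "\<phi> (dba n (2*i)) = dba n (2*s + 2*i*u)"
proof -
  have "dba n (2*i) = dba n 0 \<otimes>\<^bsub>G\<^esub> da n (2*i)" by (simp add: dmult)
  then have "\<phi> (dba n (2*i)) = \<phi> (dba n 0) \<otimes>\<^bsub>G\<^esub> \<phi> (da n (2*i))"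
    using homK[of "dba n 0" "da n (2*i)"] by (simp add: dba_K)
  then show ?thesis by (simp add: phi_b(1) phi_a2i dmult)
qed

definition "r = snd (\<phi> (da n 1)) div 2"
definition "fl = fst (\<phi> (da n 1))"

lemma phi_a: "\<phi> (da n 1) = (if fl then dba n (2*r+1) else da n (2*r+1))" "0 \<le> r" "r < m"
proof -
  define y where "y = \<phi> (da n 1)"
  have yC: "y \<in> C" and yK: "y \<notin> Kset" using phiK[of "da n 1"] by (auto simp: y_def da_K)
  have od: "odd (snd y)"
    using yK K_iff[OF yC] by simp
  have sy: "snd y = 2 * r + 1" using od by (simp add: r_def y_def)
  show "\<phi> (da n 1) = (if fl then dba n (2*r+1) else da n (2*r+1))"
  proof -
    have "y = (if fst y then dba n (snd y) else da n (snd y))" by (rule C_form(3)[OF yC])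
    then have "y = (if fst y then dba n (2*r+1) else da n (2*r+1))" by (simp only: sy)
    then show ?thesis unfolding fl_def y_def[symmetric] .
  qed
  show "0 \<le> r" "r < m" using C_form(1,2)[OF yC] od by (auto simp: r_def y_def)
qed

lemma phi_oddA: "\<phi> (da n (2*i+1)) = da n (2*i*u) \<otimes>\<^bsub>G\<^esub> \<phi> (da n 1)"
proof -
  have "da n (2*i+1) = da n (2*i) \<otimes>\<^bsub>G\<^esub> da n 1" by (simp add: dmult)
  then show ?thesis using homK[of "da n (2*i)" "da n 1"] by (simp add: da_K phi_a2i)
qed

lemma phi_oddB: "\<phi> (dba n (2*i+1)) = dba n (2*s + 2*i*u) \<otimes>\<^bsub>G\<^esub> \<phi> (da n 1)"
proof -
  have "dba n (2*i+1) = dba n (2*i) \<otimes>\<^bsub>G\<^esub> da n 1" by (simp add: dmult)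
  then show ?thesis using homK[of "dba n (2*i)" "da n 1"] by (simp add: dba_K phi_b2i)
qed


lemma pow_a2i: "(\<phi> ^^ j) (da n (2*i)) = da n (2*i*u^j)"
proof (induction j arbitrary: i)
  case 0 then show ?case by simp
next
  case (Suc j)
  have "(\<phi> ^^ Suc j) (da n (2*i)) = \<phi> (da n (2*(i*u^j)))" using Suc by (simp add: mult.assoc)
  also have "\<dots> = da n (2*(i*u^j)*u)" by (rule phi_a2i)
  also have "2*(i*u^j)*u = 2*i*u^Suc j" by (simp add: mult_ac)
  finally show ?case .
qed

lemma pow_b: "(\<phi> ^^ j) (dba n 0) = dba n (2*(s*sigma u j))"
proof (induction j)
  case 0 then show ?case by simp
next
  case (Suc j)
  have "(\<phi> ^^ Suc j) (dba n 0) = \<phi> (dba n (2*(s*sigma u j)))" using Suc by simp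
  also have "\<dots> = dba n (2*s + 2*(s*sigma u j)*u)" by (rule phi_b2i)
  also have "2*s + 2*(s*sigma u j)*u = 2*(s*sigma u (Suc j))" by (simp add: sigma_Suc2 algebra_simps)
  finally show ?case .
qed

lemma skew_a: "y \<in> C \<Longrightarrow> \<phi> (da n 1 \<otimes>\<^bsub>G\<^esub> y) = \<phi> (da n 1) \<otimes>\<^bsub>G\<^esub> (\<phi> ^^ e0) y"
  using skew(4)[of "da n 1" y] by (simp add: e0_def)

lemma pow_a_mult: "w \<in> C \<Longrightarrow> (\<phi> ^^ j) (da n 1 \<otimes>\<^bsub>G\<^esub> w) = (\<phi> ^^ j) (da n 1) \<otimes>\<^bsub>G\<^esub> (\<phi> ^^ (j * e0)) w"
proof (induction j)
  case 0 then show ?case by simp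
next
  case (Suc j)
  define x where "x = (\<phi> ^^ j) (da n 1)"
  have xC: "x \<in> C" by (simp add: x_def)
  have xK: "x \<notin> Kset" using powK[of "da n 1" j] by (simp add: x_def da_K)
  have "(\<phi> ^^ Suc j) (da n 1 \<otimes>\<^bsub>G\<^esub> w) = \<phi> (x \<otimes>\<^bsub>G\<^esub> (\<phi> ^^ (j * e0)) w)"
    using Suc by (simp add: x_def)
  also have "\<dots> = \<phi> x \<otimes>\<^bsub>G\<^esub> (\<phi> ^^ \<pi> x) ((\<phi> ^^ (j * e0)) w)"
    using skew(4)[OF xC, of "(\<phi> ^^ (j * e0)) w"] Suc by simp
  also have "\<pi> x = e0" using pi_odd[OF xC xK] .
  also have "(\<phi> ^^ e0) ((\<phi> ^^ (j * e0)) w) = (\<phi> ^^ (Suc j * e0)) w"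
    by (simp add: funpow_add[symmetric, THEN fun_cong, simplified comp_def] add.commute)
  finally show ?case by (simp add: x_def)
qed

lemma e0_sq: "[e0 * e0 = 1] (mod k)"
proof -
  have "\<forall>z\<in>C. (\<phi> ^^ (e0 * e0)) z = (\<phi> ^^ 1) z"
  proof
    fix z assume z: "z \<in> C"
    define a where "a = da n 1"
    have aC: "a \<in> C" by (simp add: a_def)
    have "\<phi> (a \<otimes>\<^bsub>G\<^esub> (a \<otimes>\<^bsub>G\<^esub> z)) = \<phi> a \<otimes>\<^bsub>G\<^esub> (\<phi> ^^ e0) (a \<otimes>\<^bsub>G\<^esub> z)"
      using skew_a[of "a \<otimes>\<^bsub>G\<^esub> z"] aC z by (simp add: a_def mC)
    also have "\<dots> = \<phi> a \<otimes>\<^bsub>G\<^esub> ((\<phi> ^^ e0) a \<otimes>\<^bsub>G\<^esub> (\<phi> ^^ (e0 * e0)) z)"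
      using pow_a_mult[OF z, of e0] by (simp add: a_def)
    finally have 1: "\<phi> (a \<otimes>\<^bsub>G\<^esub> (a \<otimes>\<^bsub>G\<^esub> z)) = \<phi> a \<otimes>\<^bsub>G\<^esub> ((\<phi> ^^ e0) a \<otimes>\<^bsub>G\<^esub> (\<phi> ^^ (e0 * e0)) z)" .
    have aa: "a \<otimes>\<^bsub>G\<^esub> a = da n 2" by (simp add: a_def dmult)
    have "\<phi> (a \<otimes>\<^bsub>G\<^esub> (a \<otimes>\<^bsub>G\<^esub> z)) = \<phi> ((a \<otimes>\<^bsub>G\<^esub> a) \<otimes>\<^bsub>G\<^esub> z)" by (simp add: dih_assoc)
    also have "\<dots> = \<phi> (a \<otimes>\<^bsub>G\<^esub> a) \<otimes>\<^bsub>G\<^esub> \<phi> z" using homK[of "da n 2" z] z by (simp add: aa da_K)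
    also have "\<phi> (a \<otimes>\<^bsub>G\<^esub> a) = \<phi> a \<otimes>\<^bsub>G\<^esub> (\<phi> ^^ e0) a" using skew_a[of a] aC by (simp add: a_def)
    finally have 2: "\<phi> (a \<otimes>\<^bsub>G\<^esub> (a \<otimes>\<^bsub>G\<^esub> z)) = \<phi> a \<otimes>\<^bsub>G\<^esub> ((\<phi> ^^ e0) a \<otimes>\<^bsub>G\<^esub> \<phi> z)"
      by (simp add: dih_assoc)
    have "(\<phi> ^^ e0) a \<otimes>\<^bsub>G\<^esub> (\<phi> ^^ (e0 * e0)) z = (\<phi> ^^ e0) a \<otimes>\<^bsub>G\<^esub> \<phi> z"
      by (rule lcanc[of "\<phi> a"]) (use 1 2 aC z mC in auto)
    then have "(\<phi> ^^ (e0 * e0)) z = \<phi> z"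
      by (rule lcanc[rotated 3]) (use aC z in auto)
    then show "(\<phi> ^^ (e0 * e0)) z = (\<phi> ^^ 1) z" by simp
  qed
  then show ?thesis by (rule pow_eq_cong)
qed

lemma e0_ne1: "\<not> [e0 = 1] (mod k)"
  using kerK[of "da n 1"] a_notK by (simp add: e0_def)

lemma e0_lt: "e0 < k" using skew(3)[of "da n 1"] by (simp add: e0_def)

lemma e0_pos: "0 < e0"
proof (rule ccontr)
  assume "\<not> 0 < e0"
  then have "[0 = 1] (mod k)" using e0_sq by simp
  then have "k dvd 1" by (simp add: cong_def)
  then show False using k2 by simp
qed

lemma gen_id:
  assumes "m dvd (u^j - 1)" "(\<phi> ^^ j) (dba n 0) = dba n 0" "(\<phi> ^^ j) (da n 1) = da n 1"
  shows "\<forall>x\<in>C. (\<phi> ^^ j) x = x"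
proof
  fix x assume x: "x \<in> C"
  have A: "(\<phi> ^^ j) (da n (2*t)) = da n (2*t)" for t
  proof -
    have "(\<phi> ^^ j) (da n (2*t)) = da n (2*t*u^j)" by (rule pow_a2i)
    also have "\<dots> = da n (2*t)"
      by (rule da_eqI[of "t * (u^j - 1)"]) (rule dvd_mult[OF assms(1)], simp add: algebra_simps)
    finally show ?thesis .
  qed
  have B: "(\<phi> ^^ j) (dba n (2*t)) = dba n (2*t)" for t
  proof -
    have "dba n (2*t) = dba n 0 \<otimes>\<^bsub>G\<^esub> da n (2*t)" by (simp add: dmult)
    then have "(\<phi> ^^ j) (dba n (2*t)) = (\<phi> ^^ j) (dba n 0) \<otimes>\<^bsub>G\<^esub> (\<phi> ^^ j) (da n (2*t))"
      using homKpow[of "dba n 0" "da n (2*t)" j] by (simp add: dba_K)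
    then show ?thesis using A assms(2) by (simp add: dmult)
  qed
  show "(\<phi> ^^ j) x = x" using x
  proof (cases rule: carrier_cases)
    case (1 t) then show ?thesis using A by simp
  next
    case (2 t) then show ?thesis using B by simp
  next
    case (3 t)
    have "da n (2*t+1) = da n (2*t) \<otimes>\<^bsub>G\<^esub> da n 1" by (simp add: dmult)
    then have "(\<phi> ^^ j) (da n (2*t+1)) = (\<phi> ^^ j) (da n (2*t)) \<otimes>\<^bsub>G\<^esub> (\<phi> ^^ j) (da n 1)"
      using homKpow[of "da n (2*t)" "da n 1" j] by (simp add: da_K)
    then show ?thesis using 3 A assms(3) by (simp add: dmult)
  next
    case (4 t)
    have "dba n (2*t+1) = dba n (2*t) \<otimes>\<^bsub>G\<^esub> da n 1" by (simp add: dmult)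
    then have "(\<phi> ^^ j) (dba n (2*t+1)) = (\<phi> ^^ j) (dba n (2*t)) \<otimes>\<^bsub>G\<^esub> (\<phi> ^^ j) (da n 1)"
      using homKpow[of "dba n (2*t)" "da n 1" j] by (simp add: dba_K)
    then show ?thesis using 4 B assms(3) by (simp add: dmult)
  qed
qed

lemma id_u: assumes "\<forall>x\<in>C. (\<phi> ^^ j) x = x" shows "m dvd (u^j - 1)"
proof -
  have "da n (2*1*u^j) = da n (2*1)" using pow_a2i[of j 1] assms by simp
  then show ?thesis by (rule da_eqD) (simp add: algebra_simps)
qed



lemma cop_m: "coprime m u" using cop_u by (simp add: coprime_commute)

lemma u_cancel: "m dvd u * z \<Longrightarrow> m dvd z"
  using coprime_dvd_mult_right_iff[OF cop_m] by blast

definition "W = u ^ (e0 - 1)"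
definition "S' = sigma u (e0 - 1)"

lemma ue0: "u ^ e0 = u * W" using e0_pos by (simp add: W_def power_eq_if)
lemma se0: "sigma u e0 = S' + W" using e0_pos sigma_Suc[of u "e0 - 1"] by (simp add: S'_def W_def)

context
  assumes nfl: "\<not> fl"
begin

lemma aI: "\<phi> (da n 1) = da n (2*r+1)" using phi_a(1) nfl by simp

lemma phiI_A: "\<phi> (da n (2*i+1)) = da n (2*i*u + 2*r + 1)"
  by (simp add: phi_oddA aI dmult add.assoc)

lemma phiI_B: "\<phi> (dba n (2*i+1)) = dba n (2*r + 2*s + 2*i*u + 1)"
proof -
  have "\<phi> (dba n (2*i+1)) = dba n (2*s + 2*i*u + (2*r+1))" by (simp add: phi_oddB aI dmult)
  also have "2*s + 2*i*u + (2*r+1) = 2*r + 2*s + 2*i*u + 1" by simp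
  finally show ?thesis .
qed

lemma powI: "(\<phi> ^^ j) (da n 1) = da n (2*(r*sigma u j) + 1)"
proof (induction j)
  case 0 then show ?case by simp
next
  case (Suc j)
  have "(\<phi> ^^ Suc j) (da n 1) = \<phi> (da n (2*(r*sigma u j) + 1))" using Suc by simp
  also have "\<dots> = da n (2*(r*sigma u j)*u + 2*r + 1)" by (rule phiI_A)
  also have "2*(r*sigma u j)*u + 2*r + 1 = 2*(r*sigma u (Suc j)) + 1" by (simp add: sigma_Suc2 algebra_simps)
  finally show ?case .
qed

lemma I_A: "m dvd (W - 1)"
proof -
  have "da n (2*1*u + 2*r + 1) = \<phi> (da n (2*1+1))" by (rule phiI_A[symmetric])
  also have "\<phi> (da n (2*1+1)) = \<phi> (da n 1 \<otimes>\<^bsub>G\<^esub> da n 2)" by (simp add: dmult)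
  also have "\<dots> = da n (2*r+1) \<otimes>\<^bsub>G\<^esub> da n (2*1*u^e0)" using skew_a[of "da n 2"] pow_a2i[of e0 1] aI by simp
  also have "\<dots> = da n (2*r+1 + 2*1*u^e0)" by (simp add: dmult)
  finally have "da n (2*1*u + 2*r + 1) = da n (2*r+1 + 2*1*u^e0)" .
  then have "m dvd (u * (1 - W))" by (rule da_eqD) (simp add: ue0 algebra_simps)
  then have "m dvd (1 - W)" by (rule u_cancel)
  then show ?thesis by (simp add: dvd_diff_commute)
qed

lemma I_B: "m dvd (u - r - r * (S' + W) - 1)"
proof -
  have "da n (2*u) = \<phi> (da n 2)" by (simp add: phi_a2)
  also have "\<phi> (da n 2) = \<phi> (da n 1 \<otimes>\<^bsub>G\<^esub> da n 1)" by (simp add: dmult)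
  also have "\<dots> = da n (2*r+1) \<otimes>\<^bsub>G\<^esub> da n (2*(r*sigma u e0) + 1)" using skew_a[of "da n 1"] powI[of e0] aI by simp
  also have "\<dots> = da n (2*r+1 + (2*(r*sigma u e0) + 1))" by (simp add: dmult)
  finally have "da n (2*u) = da n (2*r+1 + (2*(r*sigma u e0) + 1))" .
  then show ?thesis by (rule da_eqD) (simp add: se0 algebra_simps)
qed

lemma I_C: "m dvd (2*r + s - u + 1 - s * (S' + W))"
proof -
  have "dba n (2*r + 2*s + 2*(-1)*u + 1) = \<phi> (dba n (2*(-1)+1))" by (rule phiI_B[symmetric])
  also have "\<phi> (dba n (2*(-1)+1)) = \<phi> (da n 1 \<otimes>\<^bsub>G\<^esub> dba n 0)" by (simp add: dmult)
  also have "\<dots> = da n (2*r+1) \<otimes>\<^bsub>G\<^esub> dba n (2*(s*sigma u e0))" using skew_a[of "dba n 0"] pow_b[of e0] aI by simp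
  also have "\<dots> = dba n (2*(s*sigma u e0) - (2*r+1))" by (simp add: dmult)
  finally have "dba n (2*r + 2*s + 2*(-1)*u + 1) = dba n (2*(s*sigma u e0) - (2*r+1))" .
  then show ?thesis by (rule dba_eqD) (simp add: se0 algebra_simps)
qed

lemma I_r: "m dvd (r * S' - (u - 2*r - 1))"
  by (rule dvd_comb[OF I_B I_A, of _ "-1" "-r"]) (simp add: algebra_simps)

lemma I_s: "m dvd (s * S' - (- u + 2*r + 1))"
  by (rule dvd_comb[OF I_C I_A, of _ "-1" "-s"]) (simp add: algebra_simps)

lemma I_id_iff: "(\<forall>x\<in>C. (\<phi> ^^ j) x = x) \<longleftrightarrow> m dvd (u^j - 1) \<and> m dvd (r * sigma u j) \<and> m dvd (s * sigma u j)"
proof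
  assume h: "\<forall>x\<in>C. (\<phi> ^^ j) x = x"
  have "da n (2*(r*sigma u j) + 1) = da n 1" using h powI[of j] by simp
  then have 1: "m dvd (r * sigma u j)" by (rule da_eqD) simp
  have "dba n (2*(s*sigma u j)) = dba n 0" using h pow_b[of j] by simp
  then have 2: "m dvd (s * sigma u j)" by (rule dba_eqD) simp
  show "m dvd (u^j - 1) \<and> m dvd (r * sigma u j) \<and> m dvd (s * sigma u j)" using id_u[OF h] 1 2 by simp
next
  assume h: "m dvd (u^j - 1) \<and> m dvd (r * sigma u j) \<and> m dvd (s * sigma u j)"
  have "(\<phi> ^^ j) (dba n 0) = dba n 0" unfolding pow_b by (rule dba_eqI[of "s * sigma u j"]) (use h in auto)
  moreover have "(\<phi> ^^ j) (da n 1) = da n 1" unfolding powI by (rule da_eqI[of "r * sigma u j"]) (use h in auto)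
  ultimately show "\<forall>x\<in>C. (\<phi> ^^ j) x = x" using gen_id h by blast
qed

lemma I_rs_u: assumes "m dvd (r * sigma u j)" "m dvd (s * sigma u j)" shows "m dvd (u^j - 1)"
proof -
  have "u^j - 1 = S' * (r * sigma u j) + (- sigma u j) * (r * S' - (u - 2*r - 1)) + 2 * (r * sigma u j)"
    by (simp add: sigma_pow algebra_simps)
  then show ?thesis using assms(1) I_r by (simp add: dvd_add dvd_mult)
qed

lemma caseI:
  "(\<exists>r s u e :: int.
       0 \<le> r \<and> r < int (n div 2) \<and> 0 \<le> s \<and> s < int (n div 2) \<and>
       gcd u (int (n div 2)) = 1 \<and> 1 \<le> e \<and> e \<le> int k - 1 \<and>
       (\<forall>i::int.
          \<phi> (da n (2*i)) = da n (2*i*u) \<and>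
          \<phi> (da n (2*i+1)) = da n (2*i*u + 2*r + 1) \<and>
          \<phi> (dba n (2*i)) = dba n (2*i*u + 2*s) \<and>
          \<phi> (dba n (2*i+1)) = dba n (2*r + 2*s + 2*i*u + 1) \<and>
          [int (\<pi> (da n (2*i))) = 1] (mod int k) \<and>
          [int (\<pi> (dba n (2*i))) = 1] (mod int k) \<and>
          [int (\<pi> (da n (2*i+1))) = e] (mod int k) \<and>
          [int (\<pi> (dba n (2*i+1))) = e] (mod int k)) \<and>
       \<not> [u - 1 - 2*r = 0] (mod int (n div 2)) \<and>
       0 < k \<and>
       [r * sigma u k = 0] (mod int (n div 2)) \<and> [s * sigma u k = 0] (mod int (n div 2)) \<and>
       (\<forall>j::nat. 0 < j \<and> j < k \<longrightarrow>
          \<not> ([r * sigma u j = 0] (mod int (n div 2)) \<and> [s * sigma u j = 0] (mod int (n div 2)))) \<and>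
       gcd e (int k) = 1 \<and> \<not> [e = 1] (mod int k) \<and> [e^2 = 1] (mod int k) \<and>
       [u ^ nat (e - 1) = 1] (mod int (n div 2)) \<and>
       [r * sigma u (nat (e - 1)) = u - 2*r - 1] (mod int (n div 2)) \<and>
       [s * sigma u (nat (e - 1)) = - u + 2*r + 1] (mod int (n div 2)))"
proof (intro exI conjI allI impI)
  let ?e = "int e0"
  have md: "int (n div 2) = m" by (simp add: m_def)
  have ne: "nat (?e - 1) = e0 - 1" by simp
  show "0 \<le> r" "r < int (n div 2)" "0 \<le> s" "s < int (n div 2)" using phi_a(2,3) phi_b(2,3) md by auto
  show "gcd u (int (n div 2)) = 1" using cop_u md by (simp add: coprime_iff_gcd_eq_1)
  show "1 \<le> ?e" "?e \<le> int k - 1" using e0_pos e0_lt by auto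
  fix i :: int
  show "\<phi> (da n (2*i)) = da n (2*i*u)" by (rule phi_a2i)
  show "\<phi> (da n (2*i+1)) = da n (2*i*u + 2*r + 1)" by (rule phiI_A)
  show "\<phi> (dba n (2*i)) = dba n (2*i*u + 2*s)" by (simp add: phi_b2i add.commute)
  show "\<phi> (dba n (2*i+1)) = dba n (2*r + 2*s + 2*i*u + 1)" by (rule phiI_B)
  show "[int (\<pi> (da n (2*i))) = 1] (mod int k)" using piK[of "da n (2*i)"] by (simp add: da_K)
  show "[int (\<pi> (dba n (2*i))) = 1] (mod int k)" using piK[of "dba n (2*i)"] by (simp add: dba_K)
  show "[int (\<pi> (da n (2*i+1))) = ?e] (mod int k)" using pi_odd[of "da n (2*i+1)"] by (simp add: da_K)
  show "[int (\<pi> (dba n (2*i+1))) = ?e] (mod int k)" using pi_odd[of "dba n (2*i+1)"] by (simp add: dba_K)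
next
  have md: "int (n div 2) = m" by (simp add: m_def)
  show "\<not> [u - 1 - 2*r = 0] (mod int (n div 2))"
  proof
    assume "[u - 1 - 2*r = 0] (mod int (n div 2))"
    then have c: "m dvd (u - 1 - 2*r)" by (simp add: md cong_iff_dvd_diff)
    have "m dvd (r * S')" by (rule dvd_comb[OF I_r c, of _ 1 1]) (simp add: algebra_simps)
    moreover have "m dvd (s * S')" by (rule dvd_comb[OF I_s c, of _ 1 "-1"]) (simp add: algebra_simps)
    moreover have "m dvd (u^(e0-1) - 1)" using I_A by (simp add: W_def)
    ultimately have "\<forall>x\<in>C. (\<phi> ^^ (e0 - 1)) x = x" using I_id_iff by (simp add: S'_def)
    then have "k dvd (e0 - 1)" by (rule pow_dvd)
    then have "e0 - 1 = 0" using e0_lt by (metis dvd_imp_le less_imp_diff_less not_less neq0_conv)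
    then have "e0 = 1" using e0_pos by simp
    then show False using e0_ne1 by simp
  qed
next
  show "0 < k" by (rule k_pos)
next
  have md: "int (n div 2) = m" by (simp add: m_def)
  have "m dvd (r * sigma u k) \<and> m dvd (s * sigma u k)" using I_id_iff[of k] k_id by blast
  then show "[r * sigma u k = 0] (mod int (n div 2))" "[s * sigma u k = 0] (mod int (n div 2))"
    by (simp_all add: md cong_iff_dvd_diff)
next
  fix j :: nat assume j: "0 < j \<and> j < k"
  have md: "int (n div 2) = m" by (simp add: m_def)
  show "\<not> ([r * sigma u j = 0] (mod int (n div 2)) \<and> [s * sigma u j = 0] (mod int (n div 2)))"
  proof
    assume "[r * sigma u j = 0] (mod int (n div 2)) \<and> [s * sigma u j = 0] (mod int (n div 2))"
    then have h: "m dvd (r * sigma u j)" "m dvd (s * sigma u j)" by (simp_all add: md cong_iff_dvd_diff)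
    then have "\<forall>x\<in>C. (\<phi> ^^ j) x = x" using I_id_iff I_rs_u by blast
    then have "k \<le> j" using k_least j by blast
    then show False using j by simp
  qed
next
  have sq: "[int e0 * int e0 = 1] (mod int k)" using e0_sq by (metis cong_int_iff of_nat_1 of_nat_mult)
  have "coprime (int e0 * int e0) (int k)" by (rule cong_imp_coprime[OF cong_sym[OF sq]]) simp
  then show "gcd (int e0) (int k) = 1" by (simp add: coprime_iff_gcd_eq_1[symmetric])
  show "\<not> [int e0 = 1] (mod int k)" using e0_ne1 by (metis cong_int_iff of_nat_1)
  show "[(int e0)^2 = 1] (mod int k)" using sq by (simp add: power2_eq_square)
next
  have md: "int (n div 2) = m" by (simp add: m_def)
  have ne: "nat (int e0 - 1) = e0 - 1" by simp
  show "[u ^ nat (int e0 - 1) = 1] (mod int (n div 2))" using I_A by (simp add: md ne W_def cong_iff_dvd_diff)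
  show "[r * sigma u (nat (int e0 - 1)) = u - 2*r - 1] (mod int (n div 2))" using I_r by (simp add: md ne S'_def cong_iff_dvd_diff)
  show "[s * sigma u (nat (int e0 - 1)) = - u + 2*r + 1] (mod int (n div 2))" using I_s by (simp add: md ne S'_def cong_iff_dvd_diff)
qed

end


context
  assumes yfl: "fl"
begin

lemma aII: "\<phi> (da n 1) = dba n (2*r+1)" using phi_a(1) yfl by simp

lemma phiII_A: "\<phi> (da n (2*i+1)) = dba n (2*(r - i*u) + 1)"
proof -
  have "\<phi> (da n (2*i+1)) = dba n (2*r+1 - 2*i*u)" by (simp add: phi_oddA aII dmult)
  also have "2*r+1 - 2*i*u = 2*(r - i*u) + 1" by (simp add: algebra_simps)
  finally show ?thesis .
qed

lemma phiII_B: "\<phi> (dba n (2*i+1)) = da n (2*r - 2*s - 2*i*u + 1)"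
proof -
  have "\<phi> (dba n (2*i+1)) = da n (2*r+1 - (2*s + 2*i*u))" by (simp add: phi_oddB aII dmult)
  also have "2*r+1 - (2*s + 2*i*u) = 2*r - 2*s - 2*i*u + 1" by simp
  finally show ?thesis .
qed

definition "cc = r - s - r*u"

lemma powII: "(\<phi> ^^ (2*l)) (da n 1) = da n (2*(cc * zeta u (2*l)) + 1)"
proof (induction l)
  case 0 then show ?case by simp
next
  case (Suc l)
  define T where "T = cc * zeta u (2*l)"
  have "(\<phi> ^^ (2 * Suc l)) (da n 1) = \<phi> (\<phi> ((\<phi> ^^ (2*l)) (da n 1)))" by simp
  also have "\<dots> = \<phi> (\<phi> (da n (2*T + 1)))" using Suc by (simp add: T_def)
  also have "\<phi> (da n (2*T + 1)) = dba n (2*(r - T*u) + 1)" by (rule phiII_A)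
  also have "\<phi> (dba n (2*(r - T*u) + 1)) = da n (2*r - 2*s - 2*(r - T*u)*u + 1)" by (rule phiII_B)
  also have "2*r - 2*s - 2*(r - T*u)*u + 1 = 2*(cc * zeta u (2 * Suc l)) + 1"
    using zeta_Suc2[of u l] by (simp add: T_def cc_def algebra_simps power2_eq_square)
  finally show ?case .
qed

lemma powII_odd: "(\<phi> ^^ Suc (2*l)) (da n 1) = dba n (2*(r - cc * zeta u (2*l) * u) + 1)"
proof -
  have "(\<phi> ^^ Suc (2*l)) (da n 1) = \<phi> ((\<phi> ^^ (2*l)) (da n 1))" by simp
  also have "\<dots> = dba n (2*(r - cc * zeta u (2*l) * u) + 1)" unfolding powII by (rule phiII_A)
  finally show ?thesis .
qed

lemma II_A: "m dvd (W + 1)"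
proof -
  have "dba n (2*(r - 1*u) + 1) = \<phi> (da n (2*1+1))" by (rule phiII_A[symmetric])
  also have "\<phi> (da n (2*1+1)) = \<phi> (da n 1 \<otimes>\<^bsub>G\<^esub> da n 2)" by (simp add: dmult)
  also have "\<dots> = dba n (2*r+1) \<otimes>\<^bsub>G\<^esub> da n (2*1*u^e0)" using skew_a[of "da n 2"] pow_a2i[of e0 1] aII by simp
  also have "\<dots> = dba n (2*r+1 + 2*1*u^e0)" by (simp add: dmult)
  finally have "dba n (2*(r - 1*u) + 1) = dba n (2*r+1 + 2*1*u^e0)" .
  then have "m dvd (u * (- 1 - W))" by (rule dba_eqD) (simp add: ue0 algebra_simps)
  then have "m dvd (- 1 - W)" by (rule u_cancel)
  then have "m dvd (- (- 1 - W))" by (simp only: dvd_minus_iff)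
  then show ?thesis by simp
qed

lemma e0_odd: "odd e0"
proof
  assume "even e0"
  then obtain l where l: "e0 = 2*l" by (auto elim!: evenE)
  have "da n (2*u) = \<phi> (da n 2)" by (simp add: phi_a2)
  also have "\<phi> (da n 2) = \<phi> (da n 1 \<otimes>\<^bsub>G\<^esub> da n 1)" by (simp add: dmult)
  also have "\<dots> = dba n (2*r+1) \<otimes>\<^bsub>G\<^esub> da n (2*(cc * zeta u (2*l)) + 1)" using skew_a[of "da n 1"] powII[of l] aII l by simp
  also have "\<dots> = dba n (2*r+1 + (2*(cc * zeta u (2*l)) + 1))" by (simp add: dmult)
  finally show False by (simp add: da_ne_dba)
qed

definition "L = e0 div 2"
lemma e0L: "e0 = Suc (2*L)" using e0_odd by (simp add: L_def)

lemma II_B: "m dvd (1 + cc * zeta u (2*L))"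
proof -
  define T where "T = cc * zeta u (2*L)"
  have "da n (2*u) = \<phi> (da n 2)" by (simp add: phi_a2)
  also have "\<phi> (da n 2) = \<phi> (da n 1 \<otimes>\<^bsub>G\<^esub> da n 1)" by (simp add: dmult)
  also have "\<dots> = dba n (2*r+1) \<otimes>\<^bsub>G\<^esub> dba n (2*(r - T * u) + 1)"
    using skew_a[of "da n 1"] powII_odd[of L] aII e0L by (simp add: T_def)
  also have "\<dots> = da n (2*(r - T * u) + 1 - (2*r+1))" by (simp add: dmult)
  finally have "da n (2*u) = da n (2*(r - T * u) + 1 - (2*r+1))" .
  then have "m dvd (u * (1 + T))" by (rule da_eqD) (simp add: algebra_simps)
  then show ?thesis unfolding T_def by (rule u_cancel)
qed

lemma II_C: "m dvd (2*r - s + u + 1 - s * (S' + W))"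
proof -
  have "da n (2*r - 2*s - 2*(-1)*u + 1) = \<phi> (dba n (2*(-1)+1))" by (rule phiII_B[symmetric])
  also have "\<phi> (dba n (2*(-1)+1)) = \<phi> (da n 1 \<otimes>\<^bsub>G\<^esub> dba n 0)" by (simp add: dmult)
  also have "\<dots> = dba n (2*r+1) \<otimes>\<^bsub>G\<^esub> dba n (2*(s*sigma u e0))" using skew_a[of "dba n 0"] pow_b[of e0] aII by simp
  also have "\<dots> = da n (2*(s*sigma u e0) - (2*r+1))" by (simp add: dmult)
  finally have "da n (2*r - 2*s - 2*(-1)*u + 1) = da n (2*(s*sigma u e0) - (2*r+1))" .
  then show ?thesis by (rule da_eqD) (simp add: se0 algebra_simps)
qed

lemma II_s: "m dvd (s * S' - (u + 2*r + 1))"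
  by (rule dvd_comb[OF II_C II_A, of _ "-1" "-s"]) (simp add: algebra_simps)

lemma L_pos: "0 < L"
proof (rule ccontr)
  assume "\<not> 0 < L"
  then have "e0 = 1" using e0L by simp
  then have "W = 1" by (simp add: W_def)
  then have "m dvd 2" using II_A by simp
  then show False using m4 zdvd_imp_le by fastforce
qed

lemma WL: "W = u ^ (2*L)" using e0L by (simp add: W_def)

lemma II_k: "k = 4 * L"
proof -
  have j: "4 * L = 2*L + 2*L" by simp
  have "m dvd (u^(4*L) - 1)"
  proof -
    have p: "u^(4*L) = W * W" unfolding j WL by (rule power_add)
    have "u^(4*L) - 1 = (W - 1) * (W + 1)" by (simp only: p) (simp add: algebra_simps)
    then show ?thesis using II_A by simp
  qed
  moreover have "(\<phi> ^^ (4*L)) (dba n 0) = dba n 0"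
  proof -
    have "sigma u (4*L) = sigma u (2*L) * (1 + W)"
      unfolding j sigma_add WL[symmetric] by (simp add: algebra_simps)
    then have "m dvd (s * sigma u (4*L))" using II_A by (simp add: add.commute)
    then show ?thesis unfolding pow_b by (rule dba_eqI) simp
  qed
  moreover have "(\<phi> ^^ (4*L)) (da n 1) = da n 1"
  proof -
    have j2: "2*(2*L) = 2*(L+L)" by simp
    have "zeta u (2*(2*L)) = zeta u (2*L) * (1 + W)"
      unfolding j2 zeta_add WL[symmetric] by (simp add: algebra_simps)
    then have "m dvd (cc * zeta u (2*(2*L)))" using II_A by (simp add: add.commute)
    moreover have "(\<phi> ^^ (4*L)) (da n 1) = da n (2*(cc * zeta u (2*(2*L))) + 1)"
      using powII[of "2*L"] by (simp add: mult.assoc)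
    ultimately show ?thesis by (simp add: da_eqI)
  qed
  ultimately have "\<forall>x\<in>C. (\<phi> ^^ (4*L)) x = x" by (rule gen_id)
  then have d: "k dvd 4*L" by (rule pow_dvd)
  then obtain q where q: "4*L = k*q" by (auto elim!: dvdE)
  have "q \<noteq> 0"
  proof
    assume "q = 0" then show False using q L_pos by simp
  qed
  moreover have "q < 2"
  proof (rule ccontr)
    assume "\<not> q < 2"
    then have "k*2 \<le> k*q" by (intro mult_le_mono2) simp
    then have "k*2 \<le> 4*L" using q by simp
    then have "k \<le> 2*L" by simp
    then show False using e0_lt e0L by simp
  qed
  ultimately have "q = 1" by simp
  then show ?thesis using q by simp
qed

lemma caseII:
  "(\<exists>r s u e :: int.
       0 \<le> r \<and> r < int (n div 2) \<and> 0 \<le> s \<and> s < int (n div 2) \<and>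
       gcd u (int (n div 2)) = 1 \<and> odd e \<and> e > 1 \<and> int k = 2 * (e - 1) \<and>
       (\<forall>i::int.
          \<phi> (da n (2*i)) = da n (2*i*u) \<and>
          \<phi> (da n (2*i+1)) = dba n (2*r - 2*i*u + 1) \<and>
          \<phi> (dba n (2*i)) = dba n (2*s + 2*i*u) \<and>
          \<phi> (dba n (2*i+1)) = da n (2*r - 2*s - 2*i*u + 1) \<and>
          [int (\<pi> (da n (2*i))) = 1] (mod int k) \<and>
          [int (\<pi> (dba n (2*i))) = 1] (mod int k) \<and>
          [int (\<pi> (da n (2*i+1))) = e] (mod int k) \<and>
          [int (\<pi> (dba n (2*i+1))) = e] (mod int k)) \<and>
       [u ^ nat (e - 1) = - 1] (mod int (n div 2)) \<and>
       [s * sigma u (nat (e - 1)) = u + 2*r + 1] (mod int (n div 2)) \<and>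
       [r * xi u (nat (e - 1)) = s * zeta u (nat (e - 1)) - 1] (mod int (n div 2)))"
proof (intro exI conjI allI)
  let ?e = "int e0"
  have md: "int (n div 2) = m" by (simp add: m_def)
  have ne: "nat (?e - 1) = 2 * L" using e0L by simp
  have ne2: "nat (2 * int L) = 2 * L" by simp
  show "0 \<le> r" "r < int (n div 2)" "0 \<le> s" "s < int (n div 2)" using phi_a(2,3) phi_b(2,3) md by auto
  show "gcd u (int (n div 2)) = 1" using cop_u md by (simp add: coprime_iff_gcd_eq_1)
  show "odd ?e" using e0_odd by simp
  show "?e > 1" using e0L L_pos by simp
  show "int k = 2 * (?e - 1)" using II_k e0L by simp
  show "[u ^ nat (?e - 1) = - 1] (mod int (n div 2))" using II_A by (simp add: md ne ne2 WL cong_iff_dvd_diff)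
  show "[s * sigma u (nat (?e - 1)) = u + 2*r + 1] (mod int (n div 2))"
    using II_s e0L by (simp add: md ne2 S'_def cong_iff_dvd_diff)
  show "[r * xi u (nat (?e - 1)) = s * zeta u (nat (?e - 1)) - 1] (mod int (n div 2))"
  proof -
    have eq: "r * xi u (2*L) - (s * zeta u (2*L) - 1) = 1 + cc * zeta u (2*L)"
      by (simp add: xi_zeta cc_def algebra_simps)
    have "m dvd (r * xi u (2*L) - (s * zeta u (2*L) - 1))" unfolding eq by (rule II_B)
    then show ?thesis by (simp add: md ne cong_iff_dvd_diff)
  qed
  fix i :: int
  show "\<phi> (da n (2*i)) = da n (2*i*u)" by (rule phi_a2i)
  have "\<phi> (da n (2*i+1)) = dba n (2*(r - i*u) + 1)" by (rule phiII_A)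
  also have "2*(r - i*u) + 1 = 2*r - 2*i*u + 1" by (simp add: algebra_simps)
  finally show "\<phi> (da n (2*i+1)) = dba n (2*r - 2*i*u + 1)" .
  show "\<phi> (dba n (2*i)) = dba n (2*s + 2*i*u)" by (rule phi_b2i)
  show "\<phi> (dba n (2*i+1)) = da n (2*r - 2*s - 2*i*u + 1)" by (rule phiII_B)
  show "[int (\<pi> (da n (2*i))) = 1] (mod int k)" using piK[of "da n (2*i)"] by (simp add: da_K)
  show "[int (\<pi> (dba n (2*i))) = 1] (mod int k)" using piK[of "dba n (2*i)"] by (simp add: dba_K)
  show "[int (\<pi> (da n (2*i+1))) = ?e] (mod int k)" using pi_odd[of "da n (2*i+1)"] by (simp add: da_K)
  show "[int (\<pi> (dba n (2*i+1))) = ?e] (mod int k)" using pi_odd[of "dba n (2*i+1)"] by (simp add: dba_K)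
qed

end

end

theorem theorem5:
  fixes n :: nat and \<phi> :: "bool \<times> int \<Rightarrow> bool \<times> int" and \<pi> :: "bool \<times> int \<Rightarrow> nat"
    and k :: nat
  assumes n8: "n \<ge> 8" and neven: "even n"
    and smooth: "smooth_skew (dihedral n) \<phi> \<pi>"
    and ker: "skew_kernel (dihedral n) \<phi> \<pi> = generate (dihedral n) {da n 2, dba n 0}"
    and kdef: "k = perm_order (dihedral n) \<phi>"
  shows
   "(\<exists>r s u e :: int.
       0 \<le> r \<and> r < int (n div 2) \<and> 0 \<le> s \<and> s < int (n div 2) \<and>
       gcd u (int (n div 2)) = 1 \<and> 1 \<le> e \<and> e \<le> int k - 1 \<and>
       (\<forall>i::int.
          \<phi> (da n (2*i)) = da n (2*i*u) \<and>
          \<phi> (da n (2*i+1)) = da n (2*i*u + 2*r + 1) \<and>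
          \<phi> (dba n (2*i)) = dba n (2*i*u + 2*s) \<and>
          \<phi> (dba n (2*i+1)) = dba n (2*r + 2*s + 2*i*u + 1) \<and>
          [int (\<pi> (da n (2*i))) = 1] (mod int k) \<and>
          [int (\<pi> (dba n (2*i))) = 1] (mod int k) \<and>
          [int (\<pi> (da n (2*i+1))) = e] (mod int k) \<and>
          [int (\<pi> (dba n (2*i+1))) = e] (mod int k)) \<and>
       \<not> [u - 1 - 2*r = 0] (mod int (n div 2)) \<and>
       0 < k \<and>
       [r * sigma u k = 0] (mod int (n div 2)) \<and> [s * sigma u k = 0] (mod int (n div 2)) \<and>
       (\<forall>j::nat. 0 < j \<and> j < k \<longrightarrow>
          \<not> ([r * sigma u j = 0] (mod int (n div 2)) \<and> [s * sigma u j = 0] (mod int (n div 2)))) \<and>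
       gcd e (int k) = 1 \<and> \<not> [e = 1] (mod int k) \<and> [e^2 = 1] (mod int k) \<and>
       [u ^ nat (e - 1) = 1] (mod int (n div 2)) \<and>
       [r * sigma u (nat (e - 1)) = u - 2*r - 1] (mod int (n div 2)) \<and>
       [s * sigma u (nat (e - 1)) = - u + 2*r + 1] (mod int (n div 2)))
  \<or>
   (\<exists>r s u e :: int.
       0 \<le> r \<and> r < int (n div 2) \<and> 0 \<le> s \<and> s < int (n div 2) \<and>
       gcd u (int (n div 2)) = 1 \<and> odd e \<and> e > 1 \<and> int k = 2 * (e - 1) \<and>
       (\<forall>i::int.
          \<phi> (da n (2*i)) = da n (2*i*u) \<and>
          \<phi> (da n (2*i+1)) = dba n (2*r - 2*i*u + 1) \<and>
          \<phi> (dba n (2*i)) = dba n (2*s + 2*i*u) \<and>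
          \<phi> (dba n (2*i+1)) = da n (2*r - 2*s - 2*i*u + 1) \<and>
          [int (\<pi> (da n (2*i))) = 1] (mod int k) \<and>
          [int (\<pi> (dba n (2*i))) = 1] (mod int k) \<and>
          [int (\<pi> (da n (2*i+1))) = e] (mod int k) \<and>
          [int (\<pi> (dba n (2*i+1))) = e] (mod int k)) \<and>
       [u ^ nat (e - 1) = - 1] (mod int (n div 2)) \<and>
       [s * sigma u (nat (e - 1)) = u + 2*r + 1] (mod int (n div 2)) \<and>
       [r * xi u (nat (e - 1)) = s * zeta u (nat (e - 1)) - 1] (mod int (n div 2)))"
proof -
  interpret sk n \<phi> \<pi> by unfold_locales (rule n8 neven smooth ker)+
  show ?thesis
  proof (cases fl)
    case True
    show ?thesis unfolding kdef by (rule disjI2) (rule caseII[OF True])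
  next
    case False
    show ?thesis unfolding kdef by (rule disjI1) (rule caseI[OF False])
  qed
qed

end
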